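(* Let $(X,d,G)$ be a $G$-system, $\{F_n\}$ a Følner sequence of $G$, and $Z$ a nonempty subset of $X$. Then: (1) if $\overline{\mathrm{mdim}}_M(G,Z,\{F_n\},d)=\infty$, then $\overline{D}_M(G,Z,\{F_n\},d)\ge1$; (2) if $\overline{\mathrm{mdim}}_M(G,Z,\{F_n\},d)<\infty$, then $0\le\overline{D}_M(G,Z,\{F_n\},d)\le1$; (3) if $0<\overline{\mathrm{mdim}}_M(G,Z,\{F_n\},d)<\infty$, then $\overline{D}_M(G,Z,\{F_n\},d)=1$.
   Context: $G$ is a countably infinite discrete amenable group; $(X,d,G)$ a compact metric space with continuous $G$-action by homeomorphisms; $\{F_n\}$ nonempty finite subsets of $G$ with $|gF_n\triangle F_n|/|F_n|\to0$ for all $g$. $d_F(x,y)=\max_{g\in F}d(gx,gy)$; $s(Z,d_F,\epsilon)$ is the maximal cardinality of a subset of $Z$ with pairwise $d_F$-distances $>\epsilon$; $h_{top}(G,Z,d,\{F_n\},\epsilon)=\limsup_n\frac1{|F_n|}\log s(Z,d_{F_n},\epsilon)$. For $s>0$, $\overline{\mathrm{mdim}}_M(G,Z,\{F_n\},s,d)=\limsup_{\epsilon\to0}h_{top}(G,Z,d,\{F_n\},\epsilon)/(\log\frac1\epsilon)^s$; $\overline{\mathrm{mdim}}_M(G,Z,\{F_n\},d)$ is the case $s=1$. The infinite upper entropy dimension is $\overline{D}_M(G,Z,\{F_n\},d)=\inf\{s>0:\overline{\mathrm{mdim}}_M(G,Z,\{F_n\},s,d)=0\}$. *)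

theory Defs
  imports "HOL-Analysis.Analysis" "HOL-Algebra.Coset"
begin

definition G_system :: "('g, 'b) monoid_scheme \<Rightarrow> ('g \<Rightarrow> 'x::metric_space \<Rightarrow> 'x) \<Rightarrow> 'x set \<Rightarrow> bool" where
  "G_system G T X \<longleftrightarrow> group G \<and> countable (carrier G) \<and> infinite (carrier G) \<and> compact X \<and>
     (\<forall>g\<in>carrier G. continuous_on X (T g) \<and> T g ` X \<subseteq> X) \<and>
     (\<forall>x\<in>X. T \<one>\<^bsub>G\<^esub> x = x) \<and>
     (\<forall>g\<in>carrier G. \<forall>h\<in>carrier G. \<forall>x\<in>X. T (g \<otimes>\<^bsub>G\<^esub> h) x = T g (T h x))"

definition Folner_seq :: "('g, 'b) monoid_scheme \<Rightarrow> (nat \<Rightarrow> 'g set) \<Rightarrow> bool" where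
  "Folner_seq G F \<longleftrightarrow> (\<forall>n. finite (F n) \<and> F n \<noteq> {} \<and> F n \<subseteq> carrier G) \<and>
     (\<forall>g\<in>carrier G. (\<lambda>n. real (card (((g <#\<^bsub>G\<^esub> F n) - F n) \<union> (F n - (g <#\<^bsub>G\<^esub> F n))))
                          / real (card (F n))) \<longlonglongrightarrow> 0)"

definition bowen_dist :: "('g \<Rightarrow> 'x::metric_space \<Rightarrow> 'x) \<Rightarrow> 'g set \<Rightarrow> 'x \<Rightarrow> 'x \<Rightarrow> real" where
  "bowen_dist T F x y = Max ((\<lambda>g. dist (T g x) (T g y)) ` F)"

definition separated :: "('g \<Rightarrow> 'x::metric_space \<Rightarrow> 'x) \<Rightarrow> 'g set \<Rightarrow> 'x set \<Rightarrow> real \<Rightarrow> 'x set \<Rightarrow> bool" where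
  "separated T F Z \<epsilon> E \<longleftrightarrow> E \<subseteq> Z \<and> finite E \<and>
     (\<forall>x\<in>E. \<forall>y\<in>E. x \<noteq> y \<longrightarrow> bowen_dist T F x y > \<epsilon>)"

definition sep_num :: "('g \<Rightarrow> 'x::metric_space \<Rightarrow> 'x) \<Rightarrow> 'g set \<Rightarrow> 'x set \<Rightarrow> real \<Rightarrow> nat" where
  "sep_num T F Z \<epsilon> = Sup {card E | E. separated T F Z \<epsilon> E}"

definition htop :: "('g \<Rightarrow> 'x::metric_space \<Rightarrow> 'x) \<Rightarrow> 'x set \<Rightarrow> (nat \<Rightarrow> 'g set) \<Rightarrow> real \<Rightarrow> ereal" where
  "htop T Z F \<epsilon> = limsup (\<lambda>n. ereal (ln (real (sep_num T (F n) Z \<epsilon>)) / real (card (F n))))"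

definition mdimM_s :: "('g \<Rightarrow> 'x::metric_space \<Rightarrow> 'x) \<Rightarrow> 'x set \<Rightarrow> (nat \<Rightarrow> 'g set) \<Rightarrow> real \<Rightarrow> ereal" where
  "mdimM_s T Z F s = Limsup (at_right 0) (\<lambda>\<epsilon>. htop T Z F \<epsilon> / ereal ((ln (1 / \<epsilon>)) powr s))"

definition mdimM :: "('g \<Rightarrow> 'x::metric_space \<Rightarrow> 'x) \<Rightarrow> 'x set \<Rightarrow> (nat \<Rightarrow> 'g set) \<Rightarrow> ereal" where
  "mdimM T Z F = mdimM_s T Z F 1"

text \<open>Infinite upper entropy dimension: inf {s>0 : mdim_M(s) = 0} (inf of empty set = \<infinity>).\<close>
definition DM :: "('g \<Rightarrow> 'x::metric_space \<Rightarrow> 'x) \<Rightarrow> 'x set \<Rightarrow> (nat \<Rightarrow> 'g set) \<Rightarrow> ereal" where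
  "DM T Z F = Inf {ereal s | s. s > 0 \<and> mdimM_s T Z F s = 0}"

end

theory Submission
  imports Defs "HOL-Real_Asymp.Real_Asymp"
begin

lemma htop_nonneg: "0 \<le> htop T Z F \<epsilon>"
proof -
  have "\<And>n. (0::ereal) \<le> ereal (ln (real (sep_num T (F n) Z \<epsilon>)) / real (card (F n)))"
  proof -
    fix n
    have "0 \<le> ln (real (sep_num T (F n) Z \<epsilon>))"
      by (cases "sep_num T (F n) Z \<epsilon> = 0") auto
    then show "(0::ereal) \<le> ereal (ln (real (sep_num T (F n) Z \<epsilon>)) / real (card (F n)))"
      by simp
  qed
  then show ?thesis unfolding htop_def
    by (intro le_Limsup) auto
qed

lemma powr_lim: assumes "s < t"
  shows "((\<lambda>\<epsilon>::real. ln (1 / \<epsilon>) powr (s - t)) \<longlongrightarrow> 0) (at_right 0)"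
proof -
  have "filterlim (\<lambda>\<epsilon>::real. ln (1 / \<epsilon>)) at_top (at_right 0)" by real_asymp
  moreover have "((\<lambda>x::real. x powr (s - t)) \<longlongrightarrow> 0) at_top"
    using assms by (intro tendsto_neg_powr filterlim_ident) auto
  ultimately show ?thesis using filterlim_compose by blast
qed

lemma lemA:
  assumes fin: "mdimM_s T Z F s < \<infinity>" and st: "s < t"
  shows "mdimM_s T Z F t = 0"
proof -
  let ?L = "\<lambda>\<epsilon>::real. ln (1 / \<epsilon>)"
  have evL: "eventually (\<lambda>\<epsilon>::real. 0 < \<epsilon> \<and> \<epsilon> < 1) (at_right 0)"
    using eventually_at_right_less[of 0] eventually_at_right_real[of 0 1] by (auto elim: eventually_mono)
  have ge: "0 \<le> mdimM_s T Z F t"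
    unfolding mdimM_s_def
  proof (rule le_Limsup)
    show "at_right (0::real) \<noteq> bot" by simp
    show "\<forall>\<^sub>F x in at_right 0. 0 \<le> htop T Z F x / ereal (ln (1 / x) powr t)"
      using evL
    proof (rule eventually_mono)
      fix x :: real assume "0 < x \<and> x < 1"
      then have "0 < ln (1/x)" by simp
      then have "0 < ln (1/x) powr t" by simp
      then show "0 \<le> htop T Z F x / ereal (ln (1 / x) powr t)"
        using htop_nonneg[of T Z F x] by (simp add: ereal_divide_eq)
    qed
  qed
  obtain C :: real where C: "mdimM_s T Z F s < ereal C" "C > 0"
  proof -
    let ?M = "mdimM_s T Z F s"
    define C0 where "C0 = max (real_of_ereal ?M + 1) 1"
    have "?M < ereal C0"
      using fin unfolding C0_def by (cases ?M) (auto simp: less_max_iff_disj)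
    moreover have "C0 > 0" unfolding C0_def by simp
    ultimately show ?thesis using that by blast
  qed
  have evs: "eventually (\<lambda>\<epsilon>. htop T Z F \<epsilon> / ereal (?L \<epsilon> powr s) < ereal C) (at_right 0)"
    using Limsup_lessD[OF C(1)[unfolded mdimM_s_def]] .
  have le: "mdimM_s T Z F t \<le> ereal e" if e: "e > 0" for e
  proof -
    have "eventually (\<lambda>\<epsilon>. ?L \<epsilon> powr (s - t) < e / C) (at_right 0)"
      using powr_lim[OF st] e C(2) by (intro order_tendstoD) auto
    then have "eventually (\<lambda>\<epsilon>. htop T Z F \<epsilon> / ereal (?L \<epsilon> powr t) \<le> ereal e) (at_right 0)"
      using evs evL
    proof (eventually_elim)
      case (elim x)
      then have Lp: "0 < ?L x" by simp
      then have p: "0 < ?L x powr s" "0 < ?L x powr t" by auto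
      obtain r where r: "htop T Z F x = ereal r" "0 \<le> r"
        using htop_nonneg[of T Z F x] elim(2) p(1)
        by (cases "htop T Z F x") (auto simp: ereal_divide_eq)
      have "r / ?L x powr s < C" using elim(2) r p by (simp add: ereal_divide_eq)
      then have "r < C * ?L x powr s" using p by (simp add: divide_less_eq)
      then have "r / ?L x powr t < C * ?L x powr s / ?L x powr t"
        using p by (simp add: divide_strict_right_mono)
      also have "\<dots> = C * ?L x powr (s - t)"
        using Lp by (simp add: powr_diff)
      also have "\<dots> \<le> e" using elim(1) C(2)
        by (simp add: less_divide_eq mult.commute less_imp_le)
      finally show ?case using r p by (simp add: ereal_divide_eq)
    qed
    then show ?thesis unfolding mdimM_s_def by (rule Limsup_bounded)
  qed
  have "mdimM_s T Z F t \<le> 0"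
  proof (rule ereal_le_epsilon2)
    fix e :: real assume "e > 0"
    then show "mdimM_s T Z F t \<le> 0 + ereal e" using le by simp
  qed
  with ge show ?thesis by simp
qed

theorem theorem3p41:
  fixes G :: "('g, 'b) monoid_scheme" and T :: "'g \<Rightarrow> 'x::metric_space \<Rightarrow> 'x"
    and X Z :: "'x set" and F :: "nat \<Rightarrow> 'g set"
  assumes "G_system G T X" and "Folner_seq G F" and "Z \<subseteq> X" and "Z \<noteq> {}"
  shows "(mdimM T Z F = \<infinity> \<longrightarrow> DM T Z F \<ge> 1)
    \<and> (mdimM T Z F < \<infinity> \<longrightarrow> 0 \<le> DM T Z F \<and> DM T Z F \<le> 1)
    \<and> (0 < mdimM T Z F \<and> mdimM T Z F < \<infinity> \<longrightarrow> DM T Z F = 1)"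
proof -
  let ?S = "{ereal s | s. s > 0 \<and> mdimM_s T Z F s = 0}"
  have lowb: "1 \<le> DM T Z F" if nz: "mdimM T Z F \<noteq> 0"
    unfolding DM_def
  proof (rule Inf_greatest)
    fix x assume "x \<in> ?S"
    then obtain s where s: "x = ereal s" "mdimM_s T Z F s = 0" by auto
    show "1 \<le> x"
    proof (rule ccontr)
      assume "\<not> 1 \<le> x"
      then have "s < 1" using s by auto
      then have "mdimM_s T Z F 1 = 0" using lemA[of T Z F s 1] s by simp
      then show False using nz by (simp add: mdimM_def)
    qed
  qed
  have upb: "DM T Z F \<le> 1" if fin: "mdimM T Z F < \<infinity>"
  proof -
    have "DM T Z F \<le> ereal t" if "t > 1" for t
    proof -
      have "mdimM_s T Z F t = 0" using lemA[of T Z F 1 t] fin that by (simp add: mdimM_def)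
      then have "ereal t \<in> ?S" using that by auto
      then show ?thesis unfolding DM_def by (rule Inf_lower)
    qed
    then have h: "\<And>e. 0 < e \<Longrightarrow> DM T Z F \<le> 1 + ereal e"
      by (simp add: one_ereal_def)
    show ?thesis by (rule ereal_le_epsilon2) (use h in simp)
  qed
  have nonneg: "0 \<le> DM T Z F"
    unfolding DM_def by (rule Inf_greatest) auto
  have c1: "mdimM T Z F = \<infinity> \<longrightarrow> DM T Z F \<ge> 1"
    using lowb by auto
  have c2: "mdimM T Z F < \<infinity> \<longrightarrow> 0 \<le> DM T Z F \<and> DM T Z F \<le> 1"
    using upb nonneg by blast
  have c3: "0 < mdimM T Z F \<and> mdimM T Z F < \<infinity> \<longrightarrow> DM T Z F = 1"
  proof
    assume a: "0 < mdimM T Z F \<and> mdimM T Z F < \<infinity>"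
    then have "1 \<le> DM T Z F" using lowb by auto
    moreover have "DM T Z F \<le> 1" using upb a by blast
    ultimately show "DM T Z F = 1" by (rule antisym[rotated])
  qed
  from c1 c2 c3 show ?thesis by blast
qed

end
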